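(* For every integer $n \geq 1$, $D_n = Der_n + (-1)^{n-1}$. Equivalently, $D_n = n!\sum_{k=0}^{n-1}\frac{(-1)^k}{k!}$.
   Context: A linear arrangement of $\{1,\ldots,n\}$ is a sequence $a_1\cdots a_n$ in which each of $1,\ldots,n$ appears exactly once. It contains the pattern $ij$ if $a_t=i$ and $a_{t+1}=j$ for some $t$; otherwise it avoids it. $D_n$ is the number of linear arrangements of $\{1,\ldots,n\}$ avoiding all of the patterns $12, 23, \ldots, (n-1)n, n1$. $Der_n = n!\sum_{k=0}^n \frac{(-1)^k}{k!}$ is the $n$-th derangement number, the number of permutations of $\{1,\ldots,n\}$ with no fixed point. *)

theory Defs
  imports Complex_Main
begin

definition linear_arrangement :: "nat \<Rightarrow> nat list \<Rightarrow> bool" where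
  "linear_arrangement n xs \<longleftrightarrow> distinct xs \<and> set xs = {1..n}"

definition contains_pattern :: "nat list \<Rightarrow> nat \<Rightarrow> nat \<Rightarrow> bool" where
  "contains_pattern xs i j \<longleftrightarrow> (\<exists>t. Suc t < length xs \<and> xs ! t = i \<and> xs ! Suc t = j)"

definition forbidden_patterns :: "nat \<Rightarrow> (nat \<times> nat) set" where
  "forbidden_patterns n = {(i, i + 1) | i. 1 \<le> i \<and> i \<le> n - 1} \<union> {(n, 1)}"

definition D :: "nat \<Rightarrow> nat" where
  "D n = card {xs. linear_arrangement n xs \<and>
                  (\<forall>(i, j) \<in> forbidden_patterns n. \<not> contains_pattern xs i j)}"

definition Der :: "nat \<Rightarrow> real" where
  "Der n = fact n * (\<Sum>k=0..n. (-1) ^ k / fact k)"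

end

theory Submission
  imports Defs "HOL-Combinatorics.Multiset_Permutations"
begin

fun adjs :: "'a list \<Rightarrow> ('a \<times> 'a) set" where
  "adjs (x # y # zs) = insert (x, y) (adjs (y # zs))"
| "adjs _ = {}"

lemma adjs_zip: "adjs xs = set (zip xs (tl xs))"
  by (induction xs rule: adjs.induct) auto

lemma adjs_nth: "adjs xs = {(xs ! t, xs ! Suc t) | t. Suc t < length xs}"
  unfolding adjs_zip set_zip by (auto simp: nth_tl)

lemma contains_adjs: "contains_pattern xs i j \<longleftrightarrow> (i, j) \<in> adjs xs"
  unfolding contains_pattern_def adjs_nth by auto

lemma adjs_set: "(x, y) \<in> adjs xs \<Longrightarrow> x \<in> set xs \<and> y \<in> set xs"
  by (induction xs rule: adjs.induct) auto

lemma adjs_finite: "finite (adjs xs)"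
  unfolding adjs_zip by simp

lemma adjs_card: "card (adjs xs) \<le> length xs - 1"
  unfolding adjs_zip using card_length[of "zip xs (tl xs)"] by simp

lemma adjs_func: "distinct xs \<Longrightarrow> (x, y) \<in> adjs xs \<Longrightarrow> (x, y') \<in> adjs xs \<Longrightarrow> y = y'"
proof -
  assume d: "distinct xs" and h: "(x, y) \<in> adjs xs" "(x, y') \<in> adjs xs"
  then obtain t t' where "Suc t < length xs" "xs ! t = x" "xs ! Suc t = y"
     "Suc t' < length xs" "xs ! t' = x" "xs ! Suc t' = y'" unfolding adjs_nth by auto
  then show ?thesis using d nth_eq_iff_index_eq[of xs t t'] by auto
qed

lemma adjs_inj: "distinct xs \<Longrightarrow> (x, y) \<in> adjs xs \<Longrightarrow> (x', y) \<in> adjs xs \<Longrightarrow> x = x'"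
proof -
  assume d: "distinct xs" and h: "(x, y) \<in> adjs xs" "(x', y) \<in> adjs xs"
  then obtain t t' where "Suc t < length xs" "xs ! t = x" "xs ! Suc t = y"
     "Suc t' < length xs" "xs ! t' = x'" "xs ! Suc t' = y" unfolding adjs_nth by auto
  then show ?thesis using d nth_eq_iff_index_eq[of xs "Suc t" "Suc t'"] by auto
qed

lemma adjs_irrefl: "distinct xs \<Longrightarrow> (x, y) \<in> adjs xs \<Longrightarrow> x \<noteq> y"
proof -
  assume d: "distinct xs" and h: "(x, y) \<in> adjs xs"
  then obtain t where "Suc t < length xs" "xs ! t = x" "xs ! Suc t = y"
     unfolding adjs_nth by auto
  then show ?thesis using d nth_eq_iff_index_eq[of xs "t" "Suc t"] by auto
qed

lemma adjs_Cons_mono: "adjs ys \<subseteq> adjs (u # ys)"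
  by (cases ys) auto

fun ins_after :: "'a \<Rightarrow> 'a \<Rightarrow> 'a list \<Rightarrow> 'a list" where
  "ins_after a b [] = []"
| "ins_after a b (x # xs) = (if x = a then a # b # ins_after a b xs else x # ins_after a b xs)"

lemma ins_after_id: "a \<notin> set zs \<Longrightarrow> ins_after a b zs = zs"
  by (induction zs) auto

lemma set_ins_after: "set (ins_after a b zs) = set zs \<union> (if a \<in> set zs then {b} else {})"
  by (induction zs) auto

lemma distinct_ins_after: "distinct zs \<Longrightarrow> b \<notin> set zs \<Longrightarrow> distinct (ins_after a b zs)"
  by (induction zs) (auto simp: set_ins_after ins_after_id)

lemma remove_ins_after: "b \<notin> set zs \<Longrightarrow> removeAll b (ins_after a b zs) = zs"
  by (induction zs) auto

lemma ins_remove: "distinct xs \<Longrightarrow> (a, b) \<in> adjs xs \<Longrightarrow> ins_after a b (removeAll b xs) = xs"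
proof (induction xs rule: adjs.induct)
  case (1 x y zs)
  show ?case
  proof (cases "(a, b) = (x, y)")
    case True
    then show ?thesis using 1 by (auto simp: ins_after_id)
  next
    case False
    then have ab: "(a, b) \<in> adjs (y # zs)" using 1 by auto
    then have "a \<in> set (y # zs)" "b \<in> set (y # zs)" using adjs_set by metis+
    then have "x \<noteq> a" "x \<noteq> b" using 1 by auto
    then show ?thesis using 1 ab by auto
  qed
qed auto

lemma lemA: "(x, y) \<in> adjs xs \<Longrightarrow> x \<noteq> b \<Longrightarrow> y \<noteq> b \<Longrightarrow> (x, y) \<in> adjs (removeAll b xs)"
proof (induction xs rule: adjs.induct)
  case (1 u v zs)
  show ?case
  proof (cases "(x, y) = (u, v)")
    case True then show ?thesis using 1 by auto
  next
    case False
    then have "(x, y) \<in> adjs (removeAll b (v # zs))" using 1 by auto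
    then show ?thesis using adjs_Cons_mono[of "removeAll b (v # zs)" u]
      by (cases "u = b") auto
  qed
qed auto

lemma lemB: "distinct xs \<Longrightarrow> (a, b) \<in> adjs xs \<Longrightarrow> (b, c) \<in> adjs xs \<Longrightarrow> c \<noteq> b
   \<Longrightarrow> (a, c) \<in> adjs (removeAll b xs)"
proof (induction xs rule: adjs.induct)
  case (1 u v zs)
  show ?case
  proof (cases "(a, b) = (u, v)")
    case True
    then have "(b, c) \<in> adjs (b # zs)" using 1 adjs_set by fastforce
    moreover have "b \<notin> set zs" using 1 True by auto
    ultimately obtain w where "zs = c # w"
    proof (cases zs)
      case (Cons w r)
      with \<open>(b, c) \<in> adjs (b # zs)\<close> \<open>b \<notin> set zs\<close> show ?thesis
        using adjs_set[of b c "w # r"] that by auto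
    qed auto
    then show ?thesis using 1 True by auto
  next
    case False
    then have ab: "(a, b) \<in> adjs (v # zs)" using 1 by auto
    then have bs: "b \<in> set (v # zs)" using adjs_set by metis
    then have "u \<noteq> b" using 1 by auto
    then have "(b, c) \<in> adjs (v # zs)" using 1 by auto
    then have "(a, c) \<in> adjs (removeAll b (v # zs))" using 1 ab by auto
    then show ?thesis using adjs_Cons_mono[of "removeAll b (v # zs)" u] \<open>u \<noteq> b\<close> by auto
  qed
qed auto

lemma ins_after_Cons: "\<exists>r. ins_after a b (v # zs) = v # r \<and> adjs (ins_after a b (v # zs)) \<supseteq> adjs (ins_after a b zs)"
  by (cases zs) auto

lemma lemC: "a \<in> set zs \<Longrightarrow> (a, b) \<in> adjs (ins_after a b zs)"
proof (induction zs)
  case (Cons x zs)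
  then show ?case
    by (cases "x = a") (auto, cases zs, auto)
qed auto

lemma lemD: "(a, y) \<in> adjs zs \<Longrightarrow> (b, y) \<in> adjs (ins_after a b zs)"
proof (induction zs rule: adjs.induct)
  case (1 u v zs)
  obtain r where r: "ins_after a b (v # zs) = v # r" using ins_after_Cons by metis
  show ?case
  proof (cases "(a, y) = (u, v)")
    case True then show ?thesis using r by auto
  next
    case False
    then have "(b, y) \<in> adjs (ins_after a b (v # zs))" using 1 by auto
    then show ?thesis using adjs_Cons_mono[of "v # r"] adjs_Cons_mono[of "b # v # r"] r by auto
  qed
qed auto

lemma lemE: "(x, y) \<in> adjs zs \<Longrightarrow> x \<noteq> a \<Longrightarrow> (x, y) \<in> adjs (ins_after a b zs)"
proof (induction zs rule: adjs.induct)
  case (1 u v zs)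
  obtain r where r: "ins_after a b (v # zs) = v # r" using ins_after_Cons by metis
  show ?case
  proof (cases "(x, y) = (u, v)")
    case True then show ?thesis using r 1 by auto
  next
    case False
    then have "(x, y) \<in> adjs (ins_after a b (v # zs))" using 1 by auto
    then show ?thesis using adjs_Cons_mono[of "v # r"] adjs_Cons_mono[of "b # v # r"] r by auto
  qed
qed auto


definition arr :: "'a set \<Rightarrow> ('a \<times> 'a) set \<Rightarrow> 'a list set" where
  "arr V Q = {xs. distinct xs \<and> set xs = V \<and> Q \<subseteq> adjs xs}"

lemma count_aux:
  "card Q = k \<Longrightarrow> distinct ys \<Longrightarrow> set ys = V \<Longrightarrow> Q \<subseteq> adjs ys \<Longrightarrow> card (arr V Q) = fact (card V - k)"
proof (induction k arbitrary: Q V ys)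
  case 0
  have "finite Q" using 0 adjs_finite[of ys] finite_subset by blast
  then have "Q = {}" using 0 by auto
  then have "arr V Q = permutations_of_set V" unfolding arr_def permutations_of_set_def by auto
  then show ?case using 0 card_permutations_of_set[of V] by auto
next
  case (Suc k)
  have finQ: "finite Q" using Suc.prems(4) adjs_finite[of ys] finite_subset by blast
  have "Q \<noteq> {}" using Suc.prems(1) by auto
  then obtain a b where ab: "(a, b) \<in> Q" by auto
  have func: "\<And>x y y'. (x, y) \<in> Q \<Longrightarrow> (x, y') \<in> Q \<Longrightarrow> y = y'"
    using adjs_func[OF Suc.prems(2)] Suc.prems(4) by blast
  have inj: "\<And>x x' y. (x, y) \<in> Q \<Longrightarrow> (x', y) \<in> Q \<Longrightarrow> x = x'"
    using adjs_inj[OF Suc.prems(2)] Suc.prems(4) by blast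
  have neq: "a \<noteq> b" using adjs_irrefl[OF Suc.prems(2)] Suc.prems(4) ab by blast
  define ren where "ren = (\<lambda>(x::'a, y::'a). (if x = b then a else x, y))"
  define Q' where "Q' = ren ` (Q - {(a, b)})"
  have injren: "inj_on ren (Q - {(a, b)})"
  proof (rule inj_onI)
    fix p q assume p: "p \<in> Q - {(a, b)}" and q: "q \<in> Q - {(a, b)}" and e: "ren p = ren q"
    obtain x y where pxy: "p = (x, y)" by fastforce
    obtain x' y' where qxy: "q = (x', y')" by fastforce
    have "y = y'" using e pxy qxy unfolding ren_def by (auto split: if_splits)
    have "y \<noteq> b" using p pxy inj ab by blast
    show "p = q"
    proof (cases "x = b \<longleftrightarrow> x' = b")
      case True then show ?thesis using e pxy qxy unfolding ren_def by (auto split: if_splits)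
    next
      case False
      then show ?thesis using e pxy qxy unfolding ren_def 
        using func ab p q \<open>y = y'\<close> \<open>y \<noteq> b\<close> by (auto split: if_splits)
    qed
  qed
  have cardQ': "card Q' = k" unfolding Q'_def using card_image[OF injren] Suc.prems(1) finQ ab by simp
  have inQ'1: "\<And>x y. (x, y) \<in> Q \<Longrightarrow> (x, y) \<noteq> (a, b) \<Longrightarrow> y \<noteq> b"
    using inj ab by blast
  have into: "Q' \<subseteq> adjs (removeAll b xs)" if "distinct xs" "Q \<subseteq> adjs xs" for xs
  proof
    fix p assume "p \<in> Q'"
    then obtain x y where xy: "(x, y) \<in> Q" "(x, y) \<noteq> (a, b)" "p = ren (x, y)" unfolding Q'_def by auto
    then have yb: "y \<noteq> b" using inQ'1 by blast
    show "p \<in> adjs (removeAll b xs)"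
    proof (cases "x = b")
      case True
      then show ?thesis using lemB[of xs a b y] that xy yb ab unfolding ren_def by auto
    next
      case False
      then show ?thesis using lemA[of x y xs b] that xy yb unfolding ren_def by auto
    qed
  qed
  have backw: "Q \<subseteq> adjs (ins_after a b zs)" if "a \<in> set zs" "Q' \<subseteq> adjs zs" for zs
  proof
    fix p assume pQ: "p \<in> Q"
    obtain x y where pxy: "p = (x, y)" by fastforce
    show "p \<in> adjs (ins_after a b zs)"
    proof (cases "p = (a, b)")
      case True then show ?thesis using lemC that by auto
    next
      case False
      then have yb: "y \<noteq> b" using inQ'1 pQ pxy by blast
      have "ren (x, y) \<in> adjs zs" using that pQ pxy False unfolding Q'_def by auto
      show ?thesis
      proof (cases "x = b")
        case True
        then show ?thesis using \<open>ren (x, y) \<in> adjs zs\<close> lemD pxy unfolding ren_def by auto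
      next
        case xb: False
        have "x \<noteq> a" using func[of a y b] pQ pxy ab yb by auto
        then show ?thesis using \<open>ren (x, y) \<in> adjs zs\<close> lemE xb pxy unfolding ren_def by auto
      qed
    qed
  qed
  have bV: "b \<in> V" "a \<in> V" using ab Suc.prems(3,4) adjs_set[of a b ys] by blast+
  have bij: "bij_betw (removeAll b) (arr V Q) (arr (V - {b}) Q')"
  proof (rule bij_betw_byWitness[where f' = "ins_after a b"])
    show "\<forall>xs\<in>arr V Q. ins_after a b (removeAll b xs) = xs"
    proof
      fix xs assume "xs \<in> arr V Q"
      then have "distinct xs" "(a, b) \<in> adjs xs" using ab unfolding arr_def by auto
      then show "ins_after a b (removeAll b xs) = xs" by (rule ins_remove)
    qed
    show "\<forall>zs\<in>arr (V - {b}) Q'. removeAll b (ins_after a b zs) = zs"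
    proof
      fix zs assume "zs \<in> arr (V - {b}) Q'"
      then have "b \<notin> set zs" unfolding arr_def by auto
      then show "removeAll b (ins_after a b zs) = zs" by (rule remove_ins_after)
    qed
    show "removeAll b ` arr V Q \<subseteq> arr (V - {b}) Q'"
    proof (rule image_subsetI)
      fix xs assume "xs \<in> arr V Q"
      then have xs: "distinct xs" "set xs = V" "Q \<subseteq> adjs xs" unfolding arr_def by auto
      have "distinct (removeAll b xs)" using xs(1) by (rule distinct_removeAll)
      moreover have "set (removeAll b xs) = V - {b}" using xs(2) by simp
      moreover have "Q' \<subseteq> adjs (removeAll b xs)" using into[OF xs(1) xs(3)] .
      ultimately show "removeAll b xs \<in> arr (V - {b}) Q'" unfolding arr_def by blast
    qed
    show "ins_after a b ` arr (V - {b}) Q' \<subseteq> arr V Q"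
    proof (rule image_subsetI)
      fix zs assume "zs \<in> arr (V - {b}) Q'"
      then have zs: "distinct zs" "set zs = V - {b}" "Q' \<subseteq> adjs zs" unfolding arr_def by auto
      have bz: "b \<notin> set zs" "a \<in> set zs" using zs(2) bV neq by auto
      have "distinct (ins_after a b zs)" using distinct_ins_after[OF zs(1) bz(1)] .
      moreover have "set (ins_after a b zs) = V" using zs(2) bz bV by (auto simp: set_ins_after)
      moreover have "Q \<subseteq> adjs (ins_after a b zs)" using backw[OF bz(2) zs(3)] .
      ultimately show "ins_after a b zs \<in> arr V Q" unfolding arr_def by blast
    qed
  qed
  have "distinct (removeAll b ys)" using Suc.prems(2) by (rule distinct_removeAll)
  moreover have "set (removeAll b ys) = V - {b}" using Suc.prems(3) by simp
  moreover have "Q' \<subseteq> adjs (removeAll b ys)" using into[OF Suc.prems(2) Suc.prems(4)] .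
  ultimately have "card (arr (V - {b}) Q') = fact (card (V - {b}) - k)"
    by (rule Suc.IH[OF cardQ'])
  moreover have "card (V - {b}) - k = card V - Suc k" using bV Suc.prems(1,3) by auto
  ultimately show ?case using bij_betw_same_card[OF bij] by simp
qed

lemma count:
  "distinct ys \<Longrightarrow> set ys = V \<Longrightarrow> Q \<subseteq> adjs ys \<Longrightarrow> card (arr V Q) = fact (card V - card Q)"
  by (rule count_aux[OF refl])


lemma ie:
  assumes "finite F" "finite U"
  shows "int (card {xs\<in>U. P \<subseteq> adjs xs \<and> (\<forall>p\<in>F. p \<notin> adjs xs)})
         = (\<Sum>S\<in>Pow F. (-1) ^ card S * int (card {xs\<in>U. P \<union> S \<subseteq> adjs xs}))"
  using assms(1)
proof (induction F arbitrary: P rule: finite_induct)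
  case empty
  then show ?case by simp
next
  case (insert e F)
  have eq: "{xs\<in>U. P \<subseteq> adjs xs \<and> (\<forall>p\<in>insert e F. p \<notin> adjs xs)}
     = {xs\<in>U. P \<subseteq> adjs xs \<and> (\<forall>p\<in>F. p \<notin> adjs xs)} - {xs\<in>U. insert e P \<subseteq> adjs xs \<and> (\<forall>p\<in>F. p \<notin> adjs xs)}"
    by auto
  have sub: "{xs\<in>U. insert e P \<subseteq> adjs xs \<and> (\<forall>p\<in>F. p \<notin> adjs xs)} \<subseteq> {xs\<in>U. P \<subseteq> adjs xs \<and> (\<forall>p\<in>F. p \<notin> adjs xs)}"
    by auto
  have fin: "finite {xs\<in>U. insert e P \<subseteq> adjs xs \<and> (\<forall>p\<in>F. p \<notin> adjs xs)}" using assms(2) by simp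
  have L: "int (card {xs\<in>U. P \<subseteq> adjs xs \<and> (\<forall>p\<in>insert e F. p \<notin> adjs xs)})
     = int (card {xs\<in>U. P \<subseteq> adjs xs \<and> (\<forall>p\<in>F. p \<notin> adjs xs)}) - int (card {xs\<in>U. insert e P \<subseteq> adjs xs \<and> (\<forall>p\<in>F. p \<notin> adjs xs)})"
  proof -
    have "card {xs\<in>U. insert e P \<subseteq> adjs xs \<and> (\<forall>p\<in>F. p \<notin> adjs xs)} \<le> card {xs\<in>U. P \<subseteq> adjs xs \<and> (\<forall>p\<in>F. p \<notin> adjs xs)}"
      using card_mono[OF _ sub] assms(2) by simp
    then show ?thesis unfolding eq card_Diff_subset[OF fin sub] by (simp add: of_nat_diff)
  qed
  have inj: "inj_on (insert e) (Pow F)" using insert.hyps by (auto simp: inj_on_def)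
  have disj: "Pow F \<inter> insert e ` Pow F = {}" using insert.hyps by auto
  have "(\<Sum>S\<in>Pow (insert e F). (-1) ^ card S * int (card {xs\<in>U. P \<union> S \<subseteq> adjs xs}))
      = (\<Sum>S\<in>Pow F. (-1) ^ card S * int (card {xs\<in>U. P \<union> S \<subseteq> adjs xs}))
       + (\<Sum>S\<in>insert e ` Pow F. (-1) ^ card S * int (card {xs\<in>U. P \<union> S \<subseteq> adjs xs}))"
    unfolding Pow_insert using insert.hyps disj by (intro sum.union_disjoint) auto
  also have "(\<Sum>S\<in>insert e ` Pow F. (-1) ^ card S * int (card {xs\<in>U. P \<union> S \<subseteq> adjs xs}))
     = (\<Sum>S\<in>Pow F. (-1) ^ card (insert e S) * int (card {xs\<in>U. P \<union> insert e S \<subseteq> adjs xs}))"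
    by (rule sum.reindex[OF inj, unfolded comp_def])
  also have "\<dots> = - (\<Sum>S\<in>Pow F. (-1) ^ card S * int (card {xs\<in>U. insert e P \<union> S \<subseteq> adjs xs}))"
    unfolding sum_negf[symmetric]
  proof (rule sum.cong[OF refl])
    fix S assume "S \<in> Pow F"
    then have "card (insert e S) = Suc (card S)" using insert.hyps finite_subset by (metis PowD card_insert_disjoint subsetD)
    moreover have "P \<union> insert e S = insert e P \<union> S" by auto
    ultimately show "(-1) ^ card (insert e S) * int (card {xs\<in>U. P \<union> insert e S \<subseteq> adjs xs})
        = - ((-1) ^ card S * int (card {xs\<in>U. insert e P \<union> S \<subseteq> adjs xs}))" by simp
  qed
  finally show ?case using L insert.IH[of P] insert.IH[of "insert e P"] by simp
qed

definition cyc :: "nat \<Rightarrow> (nat \<times> nat) set" where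
  "cyc n = (\<lambda>i. (i, i mod n + 1)) ` {1..n}"

lemma fp_cyc: "n \<ge> 1 \<Longrightarrow> forbidden_patterns n = cyc n"
  unfolding forbidden_patterns_def cyc_def
proof (intro set_eqI iffI)
  fix p assume n: "n \<ge> 1" and p: "p \<in> {(i, i + 1) |i. 1 \<le> i \<and> i \<le> n - 1} \<union> {(n, 1)}"
  then show "p \<in> (\<lambda>i. (i, i mod n + 1)) ` {1..n}"
  proof (cases "p = (n, 1)")
    case True then show ?thesis using n by force
  next
    case False
    then obtain i where "p = (i, i + 1)" "1 \<le> i" "i \<le> n - 1" using p by auto
    then show ?thesis using n by (intro image_eqI[of _ _ i]) auto
  qed
next
  fix p assume n: "n \<ge> 1" and "p \<in> (\<lambda>i. (i, i mod n + 1)) ` {1..n}"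
  then obtain i where i: "p = (i, i mod n + 1)" "1 \<le> i" "i \<le> n" by auto
  show "p \<in> {(i, i + 1) |i. 1 \<le> i \<and> i \<le> n - 1} \<union> {(n, 1)}"
  proof (cases "i = n")
    case True then show ?thesis using i by auto
  next
    case False then show ?thesis using i by auto
  qed
qed

lemma card_cyc: "card (cyc n) = n"
  unfolding cyc_def by (subst card_image) (auto simp: inj_on_def)

definition rot :: "nat \<Rightarrow> nat \<Rightarrow> nat list" where
  "rot n m = map (\<lambda>t. (m + t) mod n + 1) [0..<n]"

lemma rot_props:
  assumes m: "1 \<le> m" "m \<le> n"
  shows "distinct (rot n m) \<and> set (rot n m) = {1..n} \<and> cyc n - {(m, m mod n + 1)} \<subseteq> adjs (rot n m)"
proof -
  have n: "n \<ge> 1" using m by simp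
  have set: "set (rot n m) = {1..n}"
  proof
    show "set (rot n m) \<subseteq> {1..n}" unfolding rot_def using n by (auto simp: Suc_le_eq)
    show "{1..n} \<subseteq> set (rot n m)"
    proof
      fix j assume j: "j \<in> {1..n}"
      define t where "t = (j - 1 + n - m) mod n"
      have "t < n" unfolding t_def using n by simp
      have "(m + t) mod n = (m + (j - 1 + n - m)) mod n" unfolding t_def by (simp add: mod_add_right_eq)
      also have "\<dots> = (j - 1 + n) mod n" using m j by (simp)
      also have "\<dots> = j - 1" using j by (metis mod_add_self2 mod_less atLeastAtMost_iff diff_less zero_less_one less_le_trans)
      finally have "(m + t) mod n + 1 = j" using j by simp
      then show "j \<in> set (rot n m)" unfolding rot_def using \<open>t < n\<close> by force
    qed
  qed
  have dist: "distinct (rot n m)"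
  proof (rule card_distinct)
    show "card (set (rot n m)) = length (rot n m)" by (simp only: set) (simp add: rot_def)
  qed
  have adj: "cyc n - {(m, m mod n + 1)} \<subseteq> adjs (rot n m)"
  proof
    fix p assume pin: "p \<in> cyc n - {(m, m mod n + 1)}"
    then obtain i where i0: "p = (i, i mod n + 1)" "1 \<le> i" "i \<le> n" unfolding cyc_def by auto
    with pin have i: "p = (i, i mod n + 1)" "1 \<le> i" "i \<le> n" "i \<noteq> m" by auto
    define t where "t = (i - 1 + n - m) mod n"
    have "t < n" unfolding t_def using n by simp
    have "(m + t) mod n = (m + (i - 1 + n - m)) mod n" unfolding t_def by (simp add: mod_add_right_eq)
    also have "\<dots> = (i - 1 + n) mod n" using m i by (simp)
    also have "\<dots> = i - 1" using i by (metis mod_add_self2 mod_less diff_less zero_less_one less_le_trans)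
    finally have mt: "(m + t) mod n = i - 1" .
    have "t \<noteq> n - 1"
    proof
      assume "t = n - 1"
      then have "(m + t) mod n = (m - 1 + n) mod n" using m by simp
      also have "\<dots> = m - 1" using m by (metis mod_add_self2 mod_less diff_less zero_less_one less_le_trans)
      finally show False using mt i m by simp
    qed
    then have st: "Suc t < n" using \<open>t < n\<close> by simp
    have "(m + Suc t) mod n + 1 = i mod n + 1"
      using mt i by (metis add_Suc_right mod_Suc_eq Suc_eq_plus1 le_add_diff_inverse2 mod_mod_trivial)
    then have "rot n m ! t = i" "rot n m ! Suc t = i mod n + 1"
      using mt st i unfolding rot_def by auto
    then show "p \<in> adjs (rot n m)" unfolding adjs_nth using st i by (force simp: rot_def)
  qed
  show ?thesis using set dist adj by simp
qed


lemma arr_cyc: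
  assumes n: "n \<ge> 1" and S: "S \<subseteq> cyc n"
  shows "card (arr {1..n} S) = (if S = cyc n then 0 else fact (n - card S))"
proof (cases "S = cyc n")
  case True
  have "arr {1..n} S = {}"
  proof (rule ccontr)
    assume "arr {1..n} S \<noteq> {}"
    then obtain xs where xs: "distinct xs" "set xs = {1..n}" "cyc n \<subseteq> adjs xs" unfolding arr_def True by auto
    have "n \<le> card (adjs xs)" using card_mono[OF adjs_finite xs(3)] card_cyc by simp
    also have "\<dots> \<le> length xs - 1" by (rule adjs_card)
    also have "length xs = n" using distinct_card[OF xs(1)] xs(2) by simp
    finally show False using n by simp
  qed
  then show ?thesis using True by simp
next
  case False
  then obtain p where "p \<in> cyc n" "p \<notin> S" using S by blast
  then obtain m where m: "p = (m, m mod n + 1)" "1 \<le> m" "m \<le> n" unfolding cyc_def by auto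
  have r: "distinct (rot n m)" "set (rot n m) = {1..n}" "S \<subseteq> adjs (rot n m)"
    using rot_props[OF m(2,3)] S \<open>p \<notin> S\<close> m(1) by auto
  show ?thesis using count[OF r] False by simp
qed

lemma sum_pow_card:
  fixes g :: "nat \<Rightarrow> 'b::comm_ring_1"
  assumes "finite C"
  shows "(\<Sum>S\<in>Pow C. g (card S)) = (\<Sum>k=0..card C. of_nat (card C choose k) * g k)"
proof -
  have "(\<Sum>S\<in>Pow C. g (card S)) = (\<Sum>k\<in>{0..card C}. \<Sum>S\<in>{x. x \<in> Pow C \<and> card x = k}. g (card S))"
    by (rule sum.group[symmetric]) (use assms card_mono in auto)
  also have "\<dots> = (\<Sum>k=0..card C. of_nat (card C choose k) * g k)"
  proof (rule sum.cong[OF refl])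
    fix k
    have "(\<Sum>S\<in>{x. x \<in> Pow C \<and> card x = k}. g (card S)) = (\<Sum>S\<in>{x. x \<in> Pow C \<and> card x = k}. g k)"
      by (rule sum.cong) auto
    also have "\<dots> = of_nat (card {B. B \<subseteq> C \<and> card B = k}) * g k" by simp
    finally show "(\<Sum>S\<in>{x. x \<in> Pow C \<and> card x = k}. g (card S)) = of_nat (card C choose k) * g k"
      using n_subsets[OF assms] by simp
  qed
  finally show ?thesis .
qed

theorem proposition2p4:
  fixes n :: nat
  assumes "n \<ge> 1"
  shows "real (D n) = Der n + (-1) ^ (n - 1)"
proof -
  define U where "U = permutations_of_set {1..n}"
  have finU: "finite U" unfolding U_def by simp
  have "D n = card {xs\<in>U. {} \<subseteq> adjs xs \<and> (\<forall>p\<in>cyc n. p \<notin> adjs xs)}"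
    unfolding D_def U_def permutations_of_set_def linear_arrangement_def fp_cyc[OF assms]
      contains_adjs by (rule arg_cong[where f = card]) auto
  then have "int (D n) = (\<Sum>S\<in>Pow (cyc n). (-1) ^ card S * int (card {xs\<in>U. {} \<union> S \<subseteq> adjs xs}))"
    using ie[OF _ finU, of "cyc n" "{}"] unfolding cyc_def by simp
  also have "\<dots> = (\<Sum>S\<in>Pow (cyc n). (-1) ^ card S * int (if S = cyc n then 0 else fact (n - card S)))"
  proof (rule sum.cong[OF refl])
    fix S assume "S \<in> Pow (cyc n)"
    then have "{xs\<in>U. {} \<union> S \<subseteq> adjs xs} = arr {1..n} S"
      unfolding U_def arr_def permutations_of_set_def by auto
    then show "(-1) ^ card S * int (card {xs\<in>U. {} \<union> S \<subseteq> adjs xs})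
        = (-1) ^ card S * int (if S = cyc n then 0 else fact (n - card S))"
      using arr_cyc[OF assms] \<open>S \<in> Pow (cyc n)\<close> by simp
  qed
  also have "\<dots> = (\<Sum>S\<in>Pow (cyc n). (-1) ^ card S * int (fact (n - card S))
                    - (if S = cyc n then (-1) ^ n * int (fact (n - n)) else 0))"
    by (rule sum.cong[OF refl]) (auto simp: card_cyc)
  also have "\<dots> = (\<Sum>S\<in>Pow (cyc n). (-1) ^ card S * int (fact (n - card S))) - (-1) ^ n"
    by (simp add: sum_subtractf cyc_def)
  also have "(\<Sum>S\<in>Pow (cyc n). (-1) ^ card S * int (fact (n - card S)))
      = (\<Sum>k=0..n. int (n choose k) * ((-1) ^ k * int (fact (n - k))))"
    using sum_pow_card[of "cyc n" "\<lambda>k. (-1) ^ k * int (fact (n - k))"] card_cyc[of n]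
    unfolding cyc_def by simp
  finally have DI: "int (D n) = (\<Sum>k=0..n. int (n choose k) * ((-1) ^ k * int (fact (n - k)))) - (-1) ^ n" .
  have "real (D n) = real_of_int (int (D n))" by simp
  also have "\<dots> = (\<Sum>k=0..n. real (n choose k) * ((-1) ^ k * fact (n - k))) - (-1) ^ n"
    unfolding DI by simp
  also have "(\<Sum>k=0..n. real (n choose k) * ((-1) ^ k * fact (n - k))) = Der n"
    unfolding Der_def sum_distrib_left
  proof (rule sum.cong[OF refl])
    fix k assume "k \<in> {0..n}"
    then have "real (n choose k) = fact n / (fact k * fact (n - k))" using binomial_fact by auto
    then show "real (n choose k) * ((-1) ^ k * fact (n - k)) = fact n * ((-1) ^ k / fact k)"
      by (simp add: field_simps)
  qed
  also have "(-1::real) ^ n = - ((-1) ^ (n - 1))"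
    using assms by (metis One_nat_def Suc_diff_le diff_Suc_1 mult_minus1 power_Suc)
  finally show ?thesis by simp
qed

end
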